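(* Let $(X,\oplus,\lceil,0)$ be a finite MV-algebra. Then for all $x,y\in X$ the Fibonacci sequence attached to $x,y$, namely $u_0=x$, $u_1=y$, $u_{n+2}=u_n\oplus u_{n+1}$ ($n\in\mathbb{N}$), is stationary: there exists $k\in\mathbb{N}$ such that $u_n=u_k$ for all $n\geq k$.
   Context: An MV-algebra $(X,\oplus,\lceil,0)$ is an abelian monoid $(X,\oplus,0)$ with a unary operation $\lceil$ such that for all $x,y\in X$: $x\oplus\lceil 0=\lceil 0$; $\lceil(\lceil x)=x$; $\lceil(\lceil x\oplus y)\oplus y=\lceil(\lceil y\oplus x)\oplus x$. *)

theory Defs
  imports Main
begin

definition mv_algebra :: "'a set \<Rightarrow> ('a \<Rightarrow> 'a \<Rightarrow> 'a) \<Rightarrow> ('a \<Rightarrow> 'a) \<Rightarrow> 'a \<Rightarrow> bool" where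
  "mv_algebra X oplus neg z \<longleftrightarrow>
     z \<in> X \<and>
     (\<forall>x\<in>X. \<forall>y\<in>X. oplus x y \<in> X) \<and>
     (\<forall>x\<in>X. neg x \<in> X) \<and>
     (\<forall>x\<in>X. \<forall>y\<in>X. \<forall>w\<in>X. oplus (oplus x y) w = oplus x (oplus y w)) \<and>
     (\<forall>x\<in>X. \<forall>y\<in>X. oplus x y = oplus y x) \<and>
     (\<forall>x\<in>X. oplus x z = x) \<and>
     (\<forall>x\<in>X. oplus x (neg z) = neg z) \<and>
     (\<forall>x\<in>X. neg (neg x) = x) \<and>
     (\<forall>x\<in>X. \<forall>y\<in>X. oplus (neg (oplus (neg x) y)) y = oplus (neg (oplus (neg y) x)) x)"

fun fib_seq :: "('a \<Rightarrow> 'a \<Rightarrow> 'a) \<Rightarrow> 'a \<Rightarrow> 'a \<Rightarrow> nat \<Rightarrow> 'a" where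
  "fib_seq oplus x y 0 = x"
| "fib_seq oplus x y (Suc 0) = y"
| "fib_seq oplus x y (Suc (Suc n)) = oplus (fib_seq oplus x y n) (fib_seq oplus x y (Suc n))"

end

theory Submission
  imports Defs
begin

lemma mv_compl:
  assumes mv: "mv_algebra X oplus neg z" and x: "x \<in> X"
  shows "oplus (neg x) x = neg z"
proof -
  have z: "z \<in> X" and nz: "neg z \<in> X" using mv unfolding mv_algebra_def by auto
  have ax: "\<forall>x\<in>X. \<forall>y\<in>X. oplus (neg (oplus (neg x) y)) y = oplus (neg (oplus (neg y) x)) x"
    using mv unfolding mv_algebra_def by blast
  have "oplus (neg (oplus (neg x) (neg z))) (neg z) = oplus (neg (oplus (neg (neg z)) x)) x"
    using ax x nz by blast
  moreover have "oplus (neg (oplus (neg x) (neg z))) (neg z) = neg z"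
    using mv x nz unfolding mv_algebra_def by auto
  moreover have "neg (neg z) = z" using mv z unfolding mv_algebra_def by auto
  moreover have "oplus z x = x" using mv z x unfolding mv_algebra_def by metis
  moreover have "neg (neg z) = z" using mv z unfolding mv_algebra_def by auto
  ultimately show ?thesis by simp
qed

lemma mv_le:
  assumes mv: "mv_algebra X oplus neg z" and a: "a \<in> X" and c: "c \<in> X"
  shows "oplus (neg a) (oplus a c) = neg z"
proof -
  have na: "neg a \<in> X" using mv a unfolding mv_algebra_def by auto
  have "oplus (neg a) (oplus a c) = oplus (oplus (neg a) a) c"
    using mv na a c unfolding mv_algebra_def by metis
  also have "\<dots> = oplus (neg z) c" using mv_compl[OF mv a] by simp
  also have "\<dots> = neg z" using mv c unfolding mv_algebra_def by metis
  finally show ?thesis .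
qed

lemma mv_antisym:
  assumes mv: "mv_algebra X oplus neg z" and a: "a \<in> X" and b: "b \<in> X"
    and c: "c \<in> X" and d: "d \<in> X" and h1: "b = oplus a c" and h2: "a = oplus b d"
  shows "a = b"
proof -
  have z: "z \<in> X" using mv unfolding mv_algebra_def by auto
  have e1: "oplus (neg a) b = neg z" using mv_le[OF mv a c] h1 by simp
  have e2: "oplus (neg b) a = neg z" using mv_le[OF mv b d] h2 by simp
  have ax: "oplus (neg (oplus (neg a) b)) b = oplus (neg (oplus (neg b) a)) a"
    using mv a b unfolding mv_algebra_def by blast
  have nn: "neg (neg z) = z" using mv z unfolding mv_algebra_def by auto
  have "oplus z b = b" "oplus z a = a" using mv z a b unfolding mv_algebra_def by metis+
  then show ?thesis using ax e1 e2 nn by simp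
qed

theorem proposition2p6:
  fixes X :: "'a set" and oplus :: "'a \<Rightarrow> 'a \<Rightarrow> 'a" and neg :: "'a \<Rightarrow> 'a" and z :: 'a
  assumes "mv_algebra X oplus neg z" and "finite X"
    and "x \<in> X" and "y \<in> X"
  shows "\<exists>k::nat. \<forall>n\<ge>k. fib_seq oplus x y n = fib_seq oplus x y k"
proof -
  note mv = assms(1)
  define u where "u = fib_seq oplus x y"
  define v where "v = (\<lambda>n. u (Suc n))"
  have closed: "\<forall>a\<in>X. \<forall>b\<in>X. oplus a b \<in> X" using mv unfolding mv_algebra_def by blast
  have assoc: "\<forall>a\<in>X. \<forall>b\<in>X. \<forall>w\<in>X. oplus (oplus a b) w = oplus a (oplus b w)"
    using mv unfolding mv_algebra_def by blast
  have zX: "z \<in> X" and zr: "\<forall>a\<in>X. oplus a z = a" using mv unfolding mv_algebra_def by blast+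
  have uX: "u n \<in> X \<and> u (Suc n) \<in> X" for n
    by (induction n) (auto simp: u_def assms closed)
  have vX: "v n \<in> X" for n using uX v_def by simp
  have step: "v (Suc n) = oplus (v n) (u n)" for n
  proof -
    have "v (Suc n) = oplus (u n) (v n)" by (simp add: v_def u_def)
    also have "\<dots> = oplus (v n) (u n)" using mv uX vX unfolding mv_algebra_def by blast
    finally show ?thesis .
  qed
  have mono: "\<exists>c\<in>X. v m = oplus (v n) c" if "n \<le> m" for n m
    using that
  proof (induction m rule: dec_induct)
    case base then show ?case using zX zr vX by metis
  next
    case (step m)
    then obtain c where c: "c \<in> X" "v m = oplus (v n) c" by blast
    have "v (Suc m) = oplus (oplus (v n) c) (u m)" using step c by (simp add: \<open>\<And>n. v (Suc n) = _\<close>)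
    also have "\<dots> = oplus (v n) (oplus c (u m))" using assoc vX c uX by blast
    finally show ?case using closed c uX by blast
  qed
  define D where "D = {n. v n \<noteq> v (Suc n)}"
  have inj: "inj_on v D"
  proof (rule inj_onI)
    fix n m assume n: "n \<in> D" and m: "m \<in> D" and eq: "v n = v m"
    show "n = m"
    proof (rule ccontr)
      assume "n \<noteq> m"
      then have "\<exists>i j. i < j \<and> i \<in> D \<and> v i = v j" using n m eq
        by (metis linorder_neqE_nat)
      then obtain i j where ij: "i < j" "i \<in> D" "v i = v j" by blast
      obtain c where c: "c \<in> X" "v (Suc i) = oplus (v i) c" using mono[of i "Suc i"] by auto
      obtain d where d: "d \<in> X" "v j = oplus (v (Suc i)) d" using mono[of "Suc i" j] ij by auto
      have "v i = v (Suc i)" using mv_antisym[OF mv vX vX c(1) d(1) c(2)] d ij by simp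
      then show False using ij D_def by simp
    qed
  qed
  have "v ` D \<subseteq> X" using vX by auto
  then have fD: "finite D" using inj assms(2) finite_imageD finite_subset by metis
  define K where "K = (if D = {} then 0 else Suc (Max D))"
  have notD: "n \<notin> D" if "n \<ge> K" for n
    using that fD K_def by (metis Max_ge empty_iff not_less_eq_eq)
  have const: "v n = v K" if "n \<ge> K" for n
    using that
  proof (induction n rule: dec_induct)
    case base then show ?case by simp
  next
    case (step m) then show ?case using notD[of m] D_def by simp
  qed
  show ?thesis
  proof (intro exI allI impI)
    fix n assume "n \<ge> Suc K"
    then obtain m where "n = Suc m" "m \<ge> K" by (cases n) auto
    then show "fib_seq oplus x y n = fib_seq oplus x y (Suc K)"
      using const[of m] by (simp add: v_def u_def)
  qed
qed

end
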